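(* For positive integers $m,n$ and $h$ with $m \ge h$ and $n\ge h$, \[ \sum_{k=0}^{h} q^{(n-k)(h-k)} \left( \overline{{ n \brack k}}_{q,t} \overline{{ m \brack h-k}}_{q,t} + t\, \overline{{ n-1 \brack k}}_{q,t} \overline{{ m-1 \brack h-k-1}}_{q,t} \right) = \overline{ {m+n \brack h}}_{q,t}. \]
   Context: An overpartition is a partition in which the last occurrence of each distinct part size may be overlined; its weight $|\lambda|$ is the sum of its parts. For integers $0\le b\le a$, $\overline{{a \brack b}}_{q,t}=\sum_{\lambda} t^{\#_o(\lambda)} q^{|\lambda|}$, the sum over all overpartitions $\lambda$ with largest part at most $a-b$ and at most $b$ parts, $\#_o(\lambda)$ being the number of overlined parts; for other integer pairs $(a,b)$ (e.g. $b<0$ or $b>a$) it is $0$. *)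

theory Defs
  imports Main "HOL-Library.Multiset"
begin

text \<open>An overpartition is represented as a pair (P, V): the multiset P of its
(positive) parts, and the set V of those distinct part sizes whose last occurrence
is overlined (so V is a subset of the set of part sizes).\<close>

definition overpartitions :: "nat \<Rightarrow> nat \<Rightarrow> (nat multiset \<times> nat set) set" where
  "overpartitions L N =
     {(P, V). (\<forall>x\<in>#P. 0 < x \<and> x \<le> L) \<and> size P \<le> N \<and> V \<subseteq> set_mset P}"

definition qt_binom :: "'a::comm_ring_1 \<Rightarrow> 'a \<Rightarrow> int \<Rightarrow> int \<Rightarrow> 'a" where
  "qt_binom q t a b =
     (if 0 \<le> b \<and> b \<le> a then
        (\<Sum>(P, V)\<in>overpartitions (nat (a - b)) (nat b). t ^ card V * q ^ sum_mset P)
      else 0)"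

end

theory Submission
  imports Defs
begin

lemma ovp_finite: "finite (overpartitions L N)"
proof -
  have "overpartitions L N \<subseteq> (mset ` {xs. set xs \<subseteq> {0..L} \<and> length xs \<le> N}) \<times> Pow {0..L}"
  proof
    fix x assume "x \<in> overpartitions L N"
    then obtain P V where x: "x = (P, V)" and h: "\<forall>y\<in>#P. 0 < y \<and> y \<le> L" "size P \<le> N" "V \<subseteq> set_mset P"
      by (auto simp: overpartitions_def)
    have "P = mset (sorted_list_of_multiset P)" by simp
    moreover have "set (sorted_list_of_multiset P) \<subseteq> {0..L}" using h by auto
    moreover have "length (sorted_list_of_multiset P) \<le> N" using h
      by (metis size_mset mset_sorted_list_of_multiset)
    ultimately have "P \<in> mset ` {xs. set xs \<subseteq> {0..L} \<and> length xs \<le> N}"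
      by (intro image_eqI[where x="sorted_list_of_multiset P"]) auto
    then show "x \<in> (mset ` {xs. set xs \<subseteq> {0..L} \<and> length xs \<le> N}) \<times> Pow {0..L}"
      using x h by auto
  qed
  moreover have "finite ((mset ` {xs. set xs \<subseteq> {0..L} \<and> length xs \<le> N}) \<times> Pow {0..L})"
    using finite_lists_length_le[of "{0..L}" N] by auto
  ultimately show ?thesis by (rule finite_subset)
qed

definition G :: "'a::comm_ring_1 \<Rightarrow> 'a \<Rightarrow> nat \<Rightarrow> nat \<Rightarrow> 'a" where
  "G q t L N = (\<Sum>(P, V)\<in>overpartitions L N. t ^ card V * q ^ sum_mset P)"

lemma qt_binom_G: "qt_binom q t a b = (if 0 \<le> b \<and> b \<le> a then G q t (nat (a - b)) (nat b) else 0)"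
  by (simp add: qt_binom_def G_def)

lemma ovp_L0: "overpartitions 0 N = {({#}, {})}"
proof -
  have hp: "P = {#}" if "\<forall>x\<in>#P. 0 < x \<and> x = (0::nat)" for P
    using that by (cases P) auto
  show ?thesis by (auto simp: overpartitions_def intro: hp)
qed

lemma ovp_N0: "overpartitions L 0 = {({#}, {})}"
  by (auto simp: overpartitions_def)

lemma G_L0: "G q t 0 N = 1" by (simp add: G_def ovp_L0)
lemma G_N0: "G q t L 0 = 1" by (simp add: G_def ovp_N0)

lemma ovp_split:
  assumes "L \<ge> 1" "N \<ge> 1"
  shows "overpartitions L N = overpartitions (L-1) N
     \<union> (\<lambda>(P,V). (P + {#L#}, V)) ` overpartitions L (N-1)
     \<union> (\<lambda>(P,V). (P + {#L#}, insert L V)) ` overpartitions (L-1) (N-1)"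
proof (intro equalityI subsetI)
  fix x assume "x \<in> overpartitions L N"
  then obtain P V where x: "x = (P, V)" and h: "\<forall>y\<in>#P. 0 < y \<and> y \<le> L" "size P \<le> N" "V \<subseteq> set_mset P"
    by (auto simp: overpartitions_def)
  show "x \<in> overpartitions (L-1) N
     \<union> (\<lambda>(P,V). (P + {#L#}, V)) ` overpartitions L (N-1)
     \<union> (\<lambda>(P,V). (P + {#L#}, insert L V)) ` overpartitions (L-1) (N-1)"
  proof (cases "L \<in># P")
    case False
    have "\<forall>y\<in>#P. 0 < y \<and> y \<le> L - 1"
    proof
      fix y assume "y \<in># P"
      then have "0 < y" "y \<le> L" "y \<noteq> L" using h False by auto
      then show "0 < y \<and> y \<le> L - 1" by simp
    qed
    then show ?thesis using x h by (auto simp: overpartitions_def)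
  next
    case True
    define P' where "P' = P - {#L#}"
    have PP: "P = P' + {#L#}" using True by (simp add: P'_def)
    have sz: "size P' \<le> N - 1" using h(2) PP by simp
    show ?thesis
    proof (cases "L \<in> V \<and> L \<notin># P'")
      case True
      have "\<forall>y\<in>#P'. 0 < y \<and> y \<le> L - 1"
      proof
        fix y assume "y \<in># P'"
        then have "0 < y" "y \<le> L" "y \<noteq> L" using h PP True by auto
        then show "0 < y \<and> y \<le> L - 1" by simp
      qed
      moreover have "V - {L} \<subseteq> set_mset P'" using h(3) PP by auto
      moreover have "x = (P' + {#L#}, insert L (V - {L}))" using x PP True by auto
      ultimately have "x \<in> (\<lambda>(P,V). (P + {#L#}, insert L V)) ` overpartitions (L-1) (N-1)"
        using sz by (auto simp: overpartitions_def intro!: image_eqI[where x="(P', V - {L})"])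
      then show ?thesis by blast
    next
      case False
      have "V \<subseteq> set_mset P'" using h(3) PP False by auto
      moreover have "\<forall>y\<in>#P'. 0 < y \<and> y \<le> L" using h PP by auto
      ultimately have "x \<in> (\<lambda>(P,V). (P + {#L#}, V)) ` overpartitions L (N-1)"
        using sz x PP by (auto simp: overpartitions_def intro!: image_eqI[where x="(P', V)"])
      then show ?thesis by blast
    qed
  qed
next
  fix x assume "x \<in> overpartitions (L-1) N
     \<union> (\<lambda>(P,V). (P + {#L#}, V)) ` overpartitions L (N-1)
     \<union> (\<lambda>(P,V). (P + {#L#}, insert L V)) ` overpartitions (L-1) (N-1)"
  then consider "x \<in> overpartitions (L-1) N"
    | "x \<in> (\<lambda>(P,V). (P + {#L#}, V)) ` overpartitions L (N-1)"
    | "x \<in> (\<lambda>(P,V). (P + {#L#}, insert L V)) ` overpartitions (L-1) (N-1)" by blast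
  then show "x \<in> overpartitions L N"
  proof cases
    case 1 then show ?thesis by (force simp: overpartitions_def)
  next
    case 2
    then obtain P V where a: "(P,V) \<in> overpartitions L (N-1)" "x = (P + {#L#}, V)" by auto
    then show ?thesis using assms by (auto simp: overpartitions_def)
  next
    case 3
    then obtain P V where a: "(P,V) \<in> overpartitions (L-1) (N-1)" "x = (P + {#L#}, insert L V)" by auto
    then show ?thesis using assms by (auto simp: overpartitions_def)
  qed
qed

lemma G_rec:
  assumes "L \<ge> 1" "N \<ge> 1"
  shows "G q t L N = G q t (L-1) N + q ^ L * G q t L (N-1) + t * q ^ L * G q t (L-1) (N-1)"
proof -
  let ?f = "\<lambda>(P, V). t ^ card V * q ^ sum_mset P"
  let ?A = "overpartitions (L-1) N"
  let ?g2 = "\<lambda>(P::nat multiset,V::nat set). (P + {#L#}, V)"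
  let ?g3 = "\<lambda>(P::nat multiset,V::nat set). (P + {#L#}, insert L V)"
  let ?B = "?g2 ` overpartitions L (N-1)"
  let ?C = "?g3 ` overpartitions (L-1) (N-1)"
  have fin: "finite ?A" "finite ?B" "finite ?C" using ovp_finite by auto
  have d1: "?A \<inter> (?B \<union> ?C) = {}" using assms by (fastforce simp: overpartitions_def)
  have d2: "?B \<inter> ?C = {}"
  proof (rule ccontr)
    assume "?B \<inter> ?C \<noteq> {}"
    then obtain x where x: "x \<in> ?B" "x \<in> ?C" by blast
    from x(1) obtain P V where a1: "(P,V) \<in> overpartitions L (N-1)" "x = (P + {#L#}, V)" by auto
    from x(2) obtain P' V' where a2: "(P',V') \<in> overpartitions (L-1) (N-1)" "x = (P' + {#L#}, insert L V')" by auto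
    have a: "(P,V) \<in> overpartitions L (N-1)" "(P',V') \<in> overpartitions (L-1) (N-1)"
      and e: "P + {#L#} = P' + {#L#}" "V = insert L V'" using a1 a2 by auto
    have "P = P'" using e by simp
    moreover have "L \<in># P" using a(1) e(2) by (auto simp: overpartitions_def)
    moreover have "L \<notin># P'" using a(2) assms by (fastforce simp: overpartitions_def)
    ultimately show False by simp
  qed
  have inj2: "inj_on ?g2 (overpartitions L (N-1))" by (auto simp: inj_on_def)
  have inj3: "inj_on ?g3 (overpartitions (L-1) (N-1))"
  proof (rule inj_onI, clarify)
    fix P V P' V'
    assume a: "(P,V) \<in> overpartitions (L-1) (N-1)" "(P',V') \<in> overpartitions (L-1) (N-1)"
      and e: "P + {#L#} = P' + {#L#}" "insert L V = insert L V'"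
    have "L \<notin> V" "L \<notin> V'" using a assms by (fastforce simp: overpartitions_def)+
    then show "P = P' \<and> V = V'" using e by (metis insert_ident add_right_cancel)
  qed
  have sB: "sum ?f ?B = q ^ L * G q t L (N-1)"
  proof -
    have "sum ?f ?B = (\<Sum>x\<in>overpartitions L (N-1). ?f (?g2 x))"
      by (subst sum.reindex[OF inj2]) (simp only: comp_def)
    also have "\<dots> = (\<Sum>x\<in>overpartitions L (N-1). q ^ L * ?f x)"
      by (rule sum.cong[OF refl], clarify) (simp add: power_add mult_ac)
    also have "\<dots> = q ^ L * G q t L (N-1)"
      by (simp add: G_def sum_distrib_left)
    finally show ?thesis .
  qed
  have sC: "sum ?f ?C = t * q ^ L * G q t (L-1) (N-1)"
  proof -
    have "sum ?f ?C = (\<Sum>x\<in>overpartitions (L-1) (N-1). ?f (?g3 x))"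
      by (subst sum.reindex[OF inj3]) (simp only: comp_def)
    also have "\<dots> = (\<Sum>x\<in>overpartitions (L-1) (N-1). t * q ^ L * ?f x)"
    proof (rule sum.cong[OF refl])
      fix x assume ax: "x \<in> overpartitions (L-1) (N-1)"
      obtain P V where xPV: "x = (P, V)" by (cases x)
      have a: "(P,V) \<in> overpartitions (L-1) (N-1)" using ax xPV by simp
      have "L \<notin> V" using a assms by (fastforce simp: overpartitions_def)
      moreover have "finite V" using a by (auto simp: overpartitions_def intro: finite_subset)
      ultimately show "?f (?g3 x) = t * q ^ L * ?f x"
        unfolding xPV by (simp add: power_add mult_ac)
    qed
    also have "\<dots> = t * q ^ L * G q t (L-1) (N-1)"
      by (simp add: G_def sum_distrib_left)
    finally show ?thesis .
  qed
  have U0: "G q t L N = sum ?f (?A \<union> ?B \<union> ?C)"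
    unfolding G_def using ovp_split[OF assms] by simp
  have d3: "(?A \<union> ?B) \<inter> ?C = {}" using d1 d2 by blast
  have d4: "?A \<inter> ?B = {}" using d1 by blast
  have U1: "sum ?f (?A \<union> ?B \<union> ?C) = sum ?f (?A \<union> ?B) + sum ?f ?C"
    by (rule sum.union_disjoint[OF finite_UnI[OF fin(1) fin(2)] fin(3) d3])
  have U2: "sum ?f (?A \<union> ?B) = sum ?f ?A + sum ?f ?B"
    by (rule sum.union_disjoint[OF fin(1) fin(2) d4])
  have sA: "sum ?f ?A = G q t (L-1) N" by (simp only: G_def)
  show ?thesis unfolding U0 U1 U2 sA sB sC ..
qed

lemma B_out: "b < 0 \<or> b > a \<Longrightarrow> qt_binom q t a b = 0"
  by (auto simp: qt_binom_def)

lemma B_0: "0 \<le> a \<Longrightarrow> qt_binom q t a 0 = 1"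
  by (simp add: qt_binom_G G_N0)

lemma B_diag: "0 \<le> a \<Longrightarrow> qt_binom q t a a = 1"
  by (simp add: qt_binom_G G_L0)

lemma B_rec:
  fixes a b :: int
  assumes "\<not> (a = 0 \<and> b = 0)"
  shows "qt_binom q t a b = qt_binom q t (a-1) b + q ^ nat (a-b) * qt_binom q t (a-1) (b-1)
           + t * q ^ nat (a-b) * qt_binom q t (a-2) (b-1)"
proof -
  consider "b < 0 \<or> b > a" | "b = 0" "a \<ge> 1" | "b = a" "a \<ge> 1" | "1 \<le> b" "b < a"
    using assms by linarith
  then show ?thesis
  proof cases
    case 1 then show ?thesis by (auto simp: B_out)
  next
    case 2 then show ?thesis by (simp add: B_0 B_out)
  next
    case 3 then show ?thesis by (simp add: B_diag B_out)
  next
    case 4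
    define L where "L = nat (a - b)"
    define N where "N = nat b"
    have L1: "L \<ge> 1" "N \<ge> 1" using 4 by (auto simp: L_def N_def)
    have e1: "qt_binom q t a b = G q t L N" using 4 by (simp add: qt_binom_G L_def N_def)
    have e2: "qt_binom q t (a-1) b = G q t (L-1) N" using 4
      by (simp add: qt_binom_G L_def N_def nat_diff_distrib)
    have e3: "qt_binom q t (a-1) (b-1) = G q t L (N-1)" using 4
      by (simp add: qt_binom_G L_def N_def nat_diff_distrib)
    have e4: "qt_binom q t (a-2) (b-1) = G q t (L-1) (N-1)" using 4
      by (simp add: qt_binom_G L_def N_def nat_diff_distrib)
    show ?thesis unfolding e1 e2 e3 e4 using G_rec[OF L1] by (simp add: L_def)
  qed
qed

definition T :: "'a::comm_ring_1 \<Rightarrow> 'a \<Rightarrow> int \<Rightarrow> nat \<Rightarrow> nat \<Rightarrow> nat \<Rightarrow> 'a" where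
  "T q t M n h k = q ^ ((n - k) * (h - k)) *
            (qt_binom q t (int n) (int k) * qt_binom q t M (int h - int k)
             + t * qt_binom q t (int n - 1) (int k) * qt_binom q t (M - 1) (int h - int k - 1))"

definition F :: "'a::comm_ring_1 \<Rightarrow> 'a \<Rightarrow> int \<Rightarrow> nat \<Rightarrow> nat \<Rightarrow> 'a" where
  "F q t M n h = (\<Sum>k=0..h. T q t M n h k)"

lemma ring_aux:
  fixes E a a' b1 b2 b3 c1 c2 c3 p t :: "'a::comm_ring_1"
  shows "E * (a * (b1 + p * b2 + t * p * b3) + t * a' * (c1 + p * c2 + t * p * c3))
    = E * (a * b1 + t * a' * c1) + (E * p) * (a * b2 + t * a' * c2) + t * (E * p) * (a * b3 + t * a' * c3)"
  by (simp add: algebra_simps)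

lemma ring_aux2:
  fixes A E c X Y t :: "'a::comm_ring_1"
  shows "A + (E * c) * X + t * (E * c) * Y = A + c * (E * X) + t * c * (E * Y)"
  by (simp add: ac_simps)

lemma T_step:
  fixes M :: int
  assumes M: "M \<ge> 2" and k: "k \<le> Suc h'"
  shows "T q t M n (Suc h') k = T q t (M-1) n (Suc h') k
     + q ^ nat (M + int n - int (Suc h')) * T q t (M-1) n h' k
     + t * q ^ nat (M + int n - int (Suc h')) * T q t (M-2) n h' k"
proof -
  define j where "j = int (Suc h') - int k"
  have j1: "int h' - int k = j - 1" "int h' - int k - 1 = j - 2" "int (Suc h') - int k - 1 = j - 1"
    by (auto simp: j_def)
  have Tdef: "T q t M' n (Suc h') k = q ^ ((n - k) * (Suc h' - k)) *
            (qt_binom q t (int n) (int k) * qt_binom q t M' j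
             + t * qt_binom q t (int n - 1) (int k) * qt_binom q t (M' - 1) (j - 1))"
     "T q t M' n h' k = q ^ ((n - k) * (h' - k)) *
            (qt_binom q t (int n) (int k) * qt_binom q t M' (j - 1)
             + t * qt_binom q t (int n - 1) (int k) * qt_binom q t (M' - 1) (j - 2))" for M'
    unfolding T_def j1 by (simp_all add: j_def)
  let ?c = "q ^ nat (M + int n - int (Suc h'))"
  show ?thesis
  proof (cases "k > n")
    case True
    then show ?thesis unfolding Tdef by (simp add: B_out)
  next
    case kn: False
    show ?thesis
    proof (cases "k = Suc h' \<or> M < j")
      case True
      then have z: "qt_binom q t M' (j - 1) = 0" if "M' < M" for M'
        using that j_def by (auto intro!: B_out)
      from True have z2: "qt_binom q t M' (j - 2) = 0" if "M' < M - 1" for M'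
        using that j_def by (auto intro!: B_out)
      have m1: "M - 1 - 1 = M - 2" "M - 2 - 1 = M - 3" by simp_all
      have y1: "qt_binom q t M j = qt_binom q t (M-1) j"
        using B_rec[of M j q t] M z[of "M-1"] z[of "M-2"] by simp
      have y2: "qt_binom q t (M-1) (j-1) = qt_binom q t (M-2) (j-1)"
        using B_rec[of "M-1" "j-1" q t] M z2[of "M-2"] z2[of "M-3"] by (simp add: m1)
      have y3: "T q t (M-1) n h' k = 0" "T q t (M-2) n h' k = 0"
        unfolding Tdef m1 using z[of "M-1"] z[of "M-2"] z2[of "M-2"] z2[of "M-3"] by simp_all
      show ?thesis unfolding y3 unfolding Tdef m1 y1 y2 by simp
    next
      case False
      then have kh: "k \<le> h'" "j \<le> M" using k by auto
      let ?p = "q ^ nat (M - j)"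
      have r1: "qt_binom q t M j = qt_binom q t (M-1) j + ?p * qt_binom q t (M-1) (j-1)
           + t * ?p * qt_binom q t (M-2) (j-1)"
        using B_rec[of M j] M by simp
      have r2: "qt_binom q t (M-1) (j-1) = qt_binom q t (M-2) (j-1) + ?p * qt_binom q t (M-2) (j-2)
           + t * ?p * qt_binom q t (M-3) (j-2)"
        using B_rec[of "M-1" "j-1"] M by (simp add: algebra_simps)
      have ex: "(n - k) * (Suc h' - k) + nat (M - j) = (n - k) * (h' - k) + nat (M + int n - int (Suc h'))"
      proof -
        have "Suc h' - k = Suc (h' - k)" using kh by simp
        then have "(n - k) * (Suc h' - k) = (n - k) * (h' - k) + (n - k)" by simp
        moreover have "nat (M - j) + (n - k) = nat (M + int n - int (Suc h'))"
          using kh kn j_def by auto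
        ultimately show ?thesis by simp
      qed
      have pe: "q ^ ((n - k) * (Suc h' - k)) * ?p = q ^ ((n - k) * (h' - k)) * ?c"
        by (simp add: power_add[symmetric] ex)
      let ?E = "q ^ ((n - k) * (Suc h' - k))" and ?E' = "q ^ ((n - k) * (h' - k))"
      let ?a = "qt_binom q t (int n) (int k)" and ?a' = "qt_binom q t (int n - 1) (int k)"
      have m1: "M - 1 - 1 = M - 2" "M - 2 - 1 = M - 3" by simp_all
      have "T q t M n (Suc h') k = ?E * (?a * qt_binom q t M j + t * ?a' * qt_binom q t (M - 1) (j - 1))"
        by (rule Tdef)
      also have "\<dots> = ?E * (?a * (qt_binom q t (M-1) j + ?p * qt_binom q t (M-1) (j-1)
           + t * ?p * qt_binom q t (M-2) (j-1)) + t * ?a' * (qt_binom q t (M-2) (j-1) + ?p * qt_binom q t (M-2) (j-2)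
           + t * ?p * qt_binom q t (M-3) (j-2)))"
        by (simp only: r1 r2)
      also have "\<dots> = ?E * (?a * qt_binom q t (M-1) j + t * ?a' * qt_binom q t (M-2) (j-1))
          + (?E * ?p) * (?a * qt_binom q t (M-1) (j-1) + t * ?a' * qt_binom q t (M-2) (j-2))
          + t * (?E * ?p) * (?a * qt_binom q t (M-2) (j-1) + t * ?a' * qt_binom q t (M-3) (j-2))"
        by (rule ring_aux)
      also have "\<dots> = T q t (M-1) n (Suc h') k + ?c * T q t (M-1) n h' k + t * ?c * T q t (M-2) n h' k"
        unfolding pe Tdef m1 by (rule ring_aux2)
      finally show ?thesis .
    qed
  qed
qed

lemma T_extra: "T q t M n h' (Suc h') = 0"
  by (simp add: T_def B_out)

lemma F_ext: "F q t M n h' = (\<Sum>k=0..Suc h'. T q t M n h' k)"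
  by (simp add: F_def T_extra)

lemma F_step:
  fixes M :: int
  assumes M: "M \<ge> 2"
  shows "F q t M n (Suc h') = F q t (M-1) n (Suc h')
     + q ^ nat (M + int n - int (Suc h')) * F q t (M-1) n h'
     + t * q ^ nat (M + int n - int (Suc h')) * F q t (M-2) n h'"
proof -
  let ?c = "q ^ nat (M + int n - int (Suc h'))"
  have "F q t M n (Suc h') = (\<Sum>k=0..Suc h'. T q t (M-1) n (Suc h') k
     + ?c * T q t (M-1) n h' k + t * ?c * T q t (M-2) n h' k)"
    unfolding F_def by (rule sum.cong[OF refl]) (use T_step[OF M] in auto)
  also have "\<dots> = F q t (M-1) n (Suc h') + ?c * F q t (M-1) n h' + t * ?c * F q t (M-2) n h'"
    unfolding F_ext[of q t "M-1" n h'] F_ext[of q t "M-2" n h'] F_def[of q t "M-1" n "Suc h'"]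
    by (simp only: sum.distrib sum_distrib_left)
  finally show ?thesis .
qed

lemma F_h0: "0 \<le> M \<Longrightarrow> F q t M n 0 = 1"
  by (simp add: F_def T_def B_0 B_out)

lemma B_top0: "qt_binom q t 0 j = (if j = 0 then 1 else 0)"
proof (cases "j = 0")
  case False
  then have "j < 0 \<or> j > 0" by linarith
  then show ?thesis using False B_out[of j 0 q t] by simp
qed (simp add: B_0)

lemma B_top1: "qt_binom q t 1 j = (if j = 0 \<or> j = 1 then 1 else 0)"
proof -
  consider "j < 0 \<or> j > 1" | "j = 0" | "j = 1" by linarith
  then show ?thesis by cases (auto simp: B_0 B_out B_diag)
qed

lemma F_0: "F q t 0 n h = qt_binom q t (int n) (int h)"
proof -
  have "F q t 0 n h = (\<Sum>k=0..h. if k = h then qt_binom q t (int n) (int h) else 0)"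
    unfolding F_def
  proof (rule sum.cong[OF refl])
    fix k assume "k \<in> {0..h}"
    then show "T q t 0 n h k = (if k = h then qt_binom q t (int n) (int h) else 0)"
      by (auto simp: T_def B_top0 B_out)
  qed
  then show ?thesis by simp
qed

lemma F_1: "F q t 1 n (Suc h') = qt_binom q t (1 + int n) (int (Suc h'))"
proof -
  let ?X1 = "qt_binom q t (int n) (int (Suc h'))"
  let ?X2 = "q ^ (n - h') * (qt_binom q t (int n) (int h') + t * qt_binom q t (int n - 1) (int h'))"
  have "F q t 1 n (Suc h') = (\<Sum>k=0..Suc h'. (if k = Suc h' then ?X1 else 0) + (if k = h' then ?X2 else 0))"
    unfolding F_def
  proof (rule sum.cong[OF refl])
    fix k assume k: "k \<in> {0..Suc h'}"
    consider "k = Suc h'" | "k = h'" | "k < h'" using k by force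
    then show "T q t 1 n (Suc h') k = (if k = Suc h' then ?X1 else 0) + (if k = h' then ?X2 else 0)"
    proof cases
      case 1 then show ?thesis by (simp add: T_def B_top0 B_top1 B_out)
    next
      case 2 then show ?thesis by (simp add: T_def B_top0 B_top1 B_out algebra_simps)
    next
      case 3 then show ?thesis by (simp add: T_def B_top0 B_top1 B_out)
    qed
  qed
  also have "\<dots> = ?X1 + ?X2" by (simp add: sum.distrib)
  also have "\<dots> = qt_binom q t (1 + int n) (int (Suc h'))"
  proof (cases "h' \<le> n")
    case True
    have "nat (1 + int n - int (Suc h')) = n - h'" using True by simp
    then show ?thesis using B_rec[of "1 + int n" "int (Suc h')" q t] by (simp add: algebra_simps)
  next
    case False
    then show ?thesis using B_rec[of "1 + int n" "int (Suc h')" q t] by (simp add: B_out)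
  qed
  finally show ?thesis .
qed

lemma main: "F q t (int m) n h = qt_binom q t (int m + int n) (int h)"
proof (induction m arbitrary: h rule: less_induct)
  case (less m)
  show ?case
  proof (cases h)
    case 0 then show ?thesis by (simp add: F_h0 B_0)
  next
    case (Suc h')
    consider "m = 0" | "m = 1" | "m \<ge> 2" by linarith
    then show ?thesis
    proof cases
      case 1 then show ?thesis by (simp add: F_0)
    next
      case 2 then show ?thesis using Suc F_1 by simp
    next
      case 3
      let ?c = "q ^ nat (int m + int n - int (Suc h'))"
      have i1: "int m - 1 = int (m - 1)" "int m - 2 = int (m - 2)" using 3 by auto
      have "F q t (int m) n h = F q t (int m - 1) n (Suc h') + ?c * F q t (int m - 1) n h'
          + t * ?c * F q t (int m - 2) n h'"
        using F_step[of "int m" q t n h'] 3 Suc by simp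
      also have "\<dots> = qt_binom q t (int m + int n - 1) (int (Suc h'))
          + ?c * qt_binom q t (int m + int n - 1) (int (Suc h') - 1)
          + t * ?c * qt_binom q t (int m + int n - 2) (int (Suc h') - 1)"
        unfolding i1 using less.IH[of "m-1"] less.IH[of "m-2"] 3
        by (simp add: algebra_simps of_nat_diff)
      also have "\<dots> = qt_binom q t (int m + int n) (int h)"
        using B_rec[of "int m + int n" "int (Suc h')" q t] 3 Suc by simp
      finally show ?thesis .
    qed
  qed
qed

theorem proposition4p2:
  fixes q t :: "'a::comm_ring_1" and m n h :: nat
  assumes "0 < m" "0 < n" "0 < h" "h \<le> m" "h \<le> n"
  shows "(\<Sum>k=0..h. q ^ ((n - k) * (h - k)) *
            (qt_binom q t (int n) (int k) * qt_binom q t (int m) (int h - int k)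
             + t * qt_binom q t (int n - 1) (int k) * qt_binom q t (int m - 1) (int h - int k - 1)))
         = qt_binom q t (int m + int n) (int h)"
  using main[of q t m n h] by (simp add: F_def T_def)

end
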